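(* Let $V=\mathbb{C}^6$ and let $\ell,\ell'\subset\mathbb{P}(\wedge^2V)$ be two distinct general lines meeting at a point $\omega''$. Let $d=\mathbb{P}(D)$ and $d'=\mathbb{P}(D')$ be their pivots, and suppose $d\cap d'=\emptyset$ in $\mathbb{P}^5=\mathbb{P}(V)$. Then there exist a basis $e_0,e_1$ of $D$ and a basis $e_2,e_3$ of $D'$ such that $\omega''=[e_0\wedge e_2+e_1\wedge e_3]$.
   Context: Elements of $\wedge^2\mathbb{C}^6$ are identified with skew-symmetric $6\times6$ matrices; rank means matrix rank. Fix a basis $f_0,\dots,f_5$ of $V$. A projective line in $\mathbb{P}(\wedge^2V)$ all of whose points have rank four is called general if it is $PGL_6$-equivalent to the line $\ell_g$ spanned by $f_0\wedge f_2+f_1\wedge f_3$ and $f_0\wedge f_4+f_1\wedge f_5$. A general line $\ell$ is contained in $\mathbb{P}(W\wedge V)$ (the embedded tangent space to $\mathbb{G}(1,5)$ at $[W]$) for a unique $2$-dimensional subspace $W\subset V$ (for $\ell_g$, $W=\langle f_0,f_1\rangle$); the projective line $\mathbb{P}(W)\subset\mathbb{P}(V)$ is called the pivot of $\ell$. Work over $\mathbb{C}$. *)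

theory Defs
  imports "HOL-Analysis.Analysis"
begin

text \<open>V = C^6 is complex^6; elements of wedge^2 V are skew-symmetric 6x6 complex matrices.\<close>

type_synonym cvec = "complex^6"
type_synonym cmat = "complex^6^6"

definition skew :: "cmat \<Rightarrow> bool" where
  "skew M \<longleftrightarrow> transpose M = - M"

definition wedge :: "cvec \<Rightarrow> cvec \<Rightarrow> cmat" where
  "wedge u v = (\<chi> i j. u$i * v$j - v$i * u$j)"

definition msc :: "complex \<Rightarrow> cmat \<Rightarrow> cmat" where
  "msc a A = (\<chi> i j. a * A$i$j)"

definition span2 :: "cmat \<Rightarrow> cmat \<Rightarrow> cmat set" where
  "span2 A B = {msc a A + msc b B | a b. True}"

definition indep2 :: "cmat \<Rightarrow> cmat \<Rightarrow> bool" where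
  "indep2 A B \<longleftrightarrow> (\<forall>a b. msc a A + msc b B = 0 \<longrightarrow> a = 0 \<and> b = 0)"

definition vspan2 :: "cvec \<Rightarrow> cvec \<Rightarrow> cvec set" where
  "vspan2 u v = {a *s u + b *s v | a b. True}"

definition vindep2 :: "cvec \<Rightarrow> cvec \<Rightarrow> bool" where
  "vindep2 u v \<longleftrightarrow> (\<forall>a b. a *s u + b *s v = 0 \<longrightarrow> a = 0 \<and> b = 0)"

definition two_dim_subspace :: "cvec set \<Rightarrow> bool" where
  "two_dim_subspace D \<longleftrightarrow> (\<exists>u v. vindep2 u v \<and> D = vspan2 u v)"

definition cindep :: "cvec set \<Rightarrow> bool" where
  "cindep S \<longleftrightarrow> finite S \<and> (\<forall>c. (\<Sum>v\<in>S. c v *s v) = 0 \<longrightarrow> (\<forall>v\<in>S. c v = 0))"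

definition crank :: "cmat \<Rightarrow> nat" where
  "crank M = Max {card S | S. S \<subseteq> {column j M | j. True} \<and> cindep S}"

text \<open>A projective line in P(wedge^2 V), represented by its 2-dimensional affine cone
  (a 2-dimensional subspace of skew matrices).\<close>
definition proj_line :: "cmat set \<Rightarrow> bool" where
  "proj_line L \<longleftrightarrow> (\<exists>A B. skew A \<and> skew B \<and> indep2 A B \<and> L = span2 A B)"

definition rank_four_line :: "cmat set \<Rightarrow> bool" where
  "rank_four_line L \<longleftrightarrow> proj_line L \<and> (\<forall>M\<in>L. M \<noteq> 0 \<longrightarrow> crank M = 4)"

definition fb :: "6 \<Rightarrow> cvec" where
  "fb i = axis i 1"

definition line_g :: "cmat set" where
  "line_g = span2 (wedge (fb 0) (fb 2) + wedge (fb 1) (fb 3))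
                  (wedge (fb 0) (fb 4) + wedge (fb 1) (fb 5))"

text \<open>GL_6 acts on wedge^2 V by g (u wedge v) = gu wedge gv, i.e. M \<mapsto> g M g^T;
  scalars act trivially projectively, so PGL_6-equivalence of lines is GL_6-equivalence of cones.\<close>
definition general_line :: "cmat set \<Rightarrow> bool" where
  "general_line L \<longleftrightarrow> rank_four_line L \<and>
     (\<exists>g::cmat. det g \<noteq> 0 \<and> L = (\<lambda>M. g ** M ** transpose g) ` line_g)"

text \<open>W wedge V as a subspace of wedge^2 V: finite sums of w wedge x with w in W.\<close>
definition wedge_sp :: "cvec set \<Rightarrow> cmat set" where
  "wedge_sp W = {M. \<exists>(n::nat) w x. (\<forall>i<n. w i \<in> W) \<and> M = (\<Sum>i<n. wedge (w i) (x i))}"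

text \<open>D is (the cone over) the pivot of L: the 2-dimensional subspace W with L \<subseteq> W wedge V
  (unique for general lines).\<close>
definition is_pivot :: "cmat set \<Rightarrow> cvec set \<Rightarrow> bool" where
  "is_pivot L D \<longleftrightarrow> two_dim_subspace D \<and> L \<subseteq> wedge_sp D"

end

theory Submission
  imports Defs
begin

lemma wedge_add2: "wedge u (x + y) = wedge u x + wedge u y"
  by (simp add: wedge_def vec_eq_iff algebra_simps)
lemma wedge_add1: "wedge (u + v) x = wedge u x + wedge v x"
  by (simp add: wedge_def vec_eq_iff algebra_simps)
lemma wedge_zero2[simp]: "wedge u 0 = 0"
  by (simp add: wedge_def vec_eq_iff)
lemma wedge_scale: "wedge (a *s u) x = wedge u (a *s x)"
  by (simp add: wedge_def vec_eq_iff algebra_simps)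

lemma cong_wedge: "M ** wedge x y ** transpose M = wedge (M *v x) (M *v y)"
proof -
  have "(M ** wedge x y ** transpose M) $ i $ j = wedge (M *v x) (M *v y) $ i $ j" for i j
  proof -
    have "(M ** wedge x y ** transpose M) $ i $ j =
       (\<Sum>l\<in>UNIV. (\<Sum>k\<in>UNIV. M$i$k * (x$k * y$l - y$k * x$l)) * M$j$l)"
      by (simp add: matrix_matrix_mult_def wedge_def transpose_def)
    also have "\<dots> = (\<Sum>l\<in>UNIV. ((\<Sum>k\<in>UNIV. M$i$k * x$k) * y$l - (\<Sum>k\<in>UNIV. M$i$k * y$k) * x$l) * M$j$l)"
      by (simp add: algebra_simps sum_subtractf sum_distrib_left sum_distrib_right)
    also have "\<dots> = (\<Sum>k\<in>UNIV. M$i$k * x$k) * (\<Sum>l\<in>UNIV. M$j$l * y$l) - (\<Sum>k\<in>UNIV. M$i$k * y$k) * (\<Sum>l\<in>UNIV. M$j$l * x$l)"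
      by (simp add: algebra_simps sum_subtractf sum_distrib_left sum_distrib_right, subst sum.swap, simp)
    also have "\<dots> = wedge (M *v x) (M *v y) $ i $ j"
      by (simp add: wedge_def matrix_vector_mult_def)
    finally show ?thesis .
  qed
  then show ?thesis by (simp add: vec_eq_iff)
qed

lemma cong_add: "M ** (A + B) ** transpose M = M ** A ** transpose M + M ** B ** transpose M"
  by (simp add: matrix_add_ldistrib matrix_matrix_mult_def vec_eq_iff sum.distrib algebra_simps)

lemma mv_lin: "(M::cmat) *v (a *s x + b *s y) = a *s (M *v x) + b *s (M *v y)"
  by (simp add: matrix_vector_mult_def vec_eq_iff sum.distrib sum_distrib_left algebra_simps ac_simps)

lemma wedge_sum:
  fixes n :: nat
  assumes "\<forall>i<n. w i = a i *s u + b i *s v"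
  shows "(\<Sum>i<n. wedge (w i) (x i)) = wedge u (\<Sum>i<n. a i *s x i) + wedge v (\<Sum>i<n. b i *s x i)"
  using assms
proof (induction n)
  case 0
  then show ?case by simp
next
  case (Suc n)
  then have IH: "(\<Sum>i<n. wedge (w i) (x i)) = wedge u (\<Sum>i<n. a i *s x i) + wedge v (\<Sum>i<n. b i *s x i)"
    by simp
  have wn: "w n = a n *s u + b n *s v" using Suc.prems by simp
  show ?case
    by (simp add: IH wn wedge_add1 wedge_add2 wedge_scale algebra_simps)
qed

lemma wedge_sp_span2:
  assumes "M \<in> wedge_sp (vspan2 u v)"
  shows "\<exists>p q. M = wedge u p + wedge v q"
proof -
  from assms obtain n :: nat and w x where w: "\<forall>i<n. w i \<in> vspan2 u v" and M: "M = (\<Sum>i<n. wedge (w i) (x i))"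
    unfolding wedge_sp_def by blast
  have "\<forall>i. \<exists>ab. i < n \<longrightarrow> w i = fst ab *s u + snd ab *s v"
    using w unfolding vspan2_def by force
  then obtain ab where ab: "\<forall>i<n. w i = fst (ab i) *s u + snd (ab i) *s v"
    by metis
  show ?thesis using wedge_sum[OF ab, of x] M by blast
qed

lemma crank_wedge_le:
  "crank (wedge x y) \<le> 2"
proof -
  let ?C = "{card S | S. S \<subseteq> {column j (wedge x y) | j. True} \<and> cindep S}"
  have sub: "?C \<subseteq> {..2}"
  proof
    fix k assume "k \<in> ?C"
    then obtain S where k: "k = card S" and S: "S \<subseteq> {column j (wedge x y) | j. True}" "cindep S"
      by blast
    have fin: "finite S" using S(2) unfolding cindep_def by blast
    have ind: "vec.independent S"
      using S(2) fin unfolding cindep_def by (auto simp: vec.dependent_finite)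
    have "column j (wedge x y) = (y$j) *s x + (-(x$j)) *s y" for j
      by (simp add: column_def wedge_def vec_eq_iff algebra_simps)
    then have "S \<subseteq> vec.span {x, y}"
    proof -
      assume cj: "\<And>j. column j (wedge x y) = (y$j) *s x + (-(x$j)) *s y"
      show ?thesis
      proof
        fix z assume "z \<in> S"
        then obtain j where "z = column j (wedge x y)" using S(1) by blast
        then have z: "z = (y$j) *s x + (-(x$j)) *s y" using cj by simp
        show "z \<in> vec.span {x, y}" unfolding z
          by (intro vec.span_add vec.span_scale vec.span_base) auto
      qed
    qed
    then have "card S \<le> card {x, y}"
      using vec.independent_span_bound[of "{x,y}" S] ind by auto
    also have "\<dots> \<le> 2" by (simp add: card_insert_le_m1)
    finally show "k \<in> {..2}" using k by simp
  qed
  have ne: "0 \<in> ?C"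
    by (rule CollectI, rule exI[of _ "{}"]) (simp add: cindep_def)
  have "finite ?C" using sub finite_subset by blast
  then have "crank (wedge x y) \<in> ?C" unfolding crank_def using ne by (intro Max_in) auto
  then show ?thesis using sub by auto
qed

lemma wedge_axis_entry:
  "wedge (axis k 1) y $ i $ j = (if i = k then y$j else 0) - (if j = k then y$i else 0)"
  by (simp add: wedge_def axis_def)

lemma core:
  fixes u0 u1 u2 u3 p q r s :: cvec and \<omega> :: cmat
  assumes ind: "vec.independent {u0,u1,u2,u3}"
    and d: "u0 \<noteq> u1" "u0 \<noteq> u2" "u0 \<noteq> u3" "u1 \<noteq> u2" "u1 \<noteq> u3" "u2 \<noteq> u3"
    and r1: "\<omega> = wedge u0 p + wedge u1 q" and r2: "\<omega> = wedge u2 r + wedge u3 s"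
  shows "\<exists>A B C E. \<omega> = wedge u0 (A *s u2 + B *s u3) + wedge u1 (C *s u2 + E *s u3)"
proof -
  obtain Bs where Bs: "{u0,u1,u2,u3} \<subseteq> Bs" "vec.independent Bs" "UNIV \<subseteq> vec.span Bs"
    using vec.maximal_independent_subset_extend[OF subset_UNIV ind] by metis
  have finB: "finite Bs" using Bs(2) vec.finiteI_independent by blast
  have "card Bs = vec.dim (UNIV :: cvec set)"
    using vec.basis_card_eq_dim[OF subset_UNIV Bs(3) Bs(2)] .
  also have "\<dots> = CARD(6)" by (simp add: card_cart_basis)
  finally have cB: "card (UNIV :: 6 set) = card Bs" by simp
  obtain f where f: "bij_betw f (UNIV :: 6 set) Bs"
    using finite_same_card_bij[OF _ finB cB] by auto
  define g :: cmat where "g = (\<chi> i j. f j $ i)"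
  have gax: "g *v axis k 1 = f k" for k
    by (simp add: g_def matrix_vector_mult_def axis_def vec_eq_iff if_distrib cong: if_cong)
  have colg: "column j g = f j" for j
    by (simp add: g_def column_def vec_eq_iff)
  have "\<forall>c. (\<Sum>i\<in>UNIV. c i *s column i g) = 0 \<longrightarrow> (\<forall>i. c i = 0)"
  proof (intro allI impI)
    fix c :: "6 \<Rightarrow> complex" and i
    assume "(\<Sum>i\<in>UNIV. c i *s column i g) = 0"
    then have "(\<Sum>i\<in>UNIV. c i *s f i) = 0" by (simp add: colg)
    moreover have "(\<Sum>i\<in>UNIV. c i *s f i) = (\<Sum>b\<in>Bs. c (inv_into UNIV f b) *s b)"
      using sum.reindex_bij_betw[OF f, of "\<lambda>b. c (inv_into UNIV f b) *s b"] f
      by (simp add: bij_betw_inv_into_left)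
    ultimately have "(\<Sum>b\<in>Bs. c (inv_into UNIV f b) *s b) = 0" by simp
    then have "\<forall>b\<in>Bs. c (inv_into UNIV f b) = 0"
      using Bs(2) finB by (auto simp: vec.dependent_finite)
    then have "c (inv_into UNIV f (f i)) = 0"
      using f bij_betwE by blast
    then show "c i = 0" using f by (simp add: bij_betw_inv_into_left)
  qed
  then obtain h :: cmat where hg: "h ** g = mat 1"
    using matrix_left_invertible_independent_columns[of g] by blast
  then have gh: "g ** h = mat 1" using matrix_left_right_inverse by blast
  have "\<exists>k. f k = u" if "u \<in> Bs" for u
    using f that by (metis bij_betw_inv_into_right UNIV_I)
  then obtain k0 k1 k2 k3 where k: "f k0 = u0" "f k1 = u1" "f k2 = u2" "f k3 = u3"
    using Bs(1) by (metis insert_subset)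
  have kd: "k0 \<noteq> k1" "k0 \<noteq> k2" "k0 \<noteq> k3" "k1 \<noteq> k2" "k1 \<noteq> k3" "k2 \<noteq> k3"
    using d k by auto
  have hu: "h *v f kk = axis kk 1" for kk
    by (metis gax hg matrix_vector_mul_assoc matrix_vector_mul_lid)
  define \<omega>' where "\<omega>' = h ** \<omega> ** transpose h"
  have w1: "\<omega>' = wedge (axis k0 1) (h *v p) + wedge (axis k1 1) (h *v q)"
    unfolding \<omega>'_def r1 cong_add cong_wedge using hu k by metis
  have w2: "\<omega>' = wedge (axis k2 1) (h *v r) + wedge (axis k3 1) (h *v s)"
    unfolding \<omega>'_def r2 cong_add cong_wedge using hu k by metis
  have Z1: "\<omega>'$i$j = 0" if "i \<noteq> k0" "i \<noteq> k1" "j \<noteq> k0" "j \<noteq> k1" for i j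
    using that by (simp add: w1 wedge_axis_entry)
  have Z2: "\<omega>'$i$j = 0" if "i \<noteq> k2" "i \<noteq> k3" "j \<noteq> k2" "j \<noteq> k3" for i j
    using that by (simp add: w2 wedge_axis_entry)
  have Sk: "\<omega>'$i$j = - \<omega>'$j$i" for i j
    by (simp add: w1 wedge_axis_entry)
  define A where "A = \<omega>'$k0$k2"
  define B where "B = \<omega>'$k0$k3"
  define C where "C = \<omega>'$k1$k2"
  define E where "E = \<omega>'$k1$k3"
  have S1: "\<omega>'$k2$k0 = - A" "\<omega>'$k3$k0 = - B" "\<omega>'$k2$k1 = - C" "\<omega>'$k3$k1 = - E"
    unfolding A_def B_def C_def E_def by (metis Sk minus_minus)+
  have main: "\<omega>' = wedge (axis k0 1) (A *s axis k2 1 + B *s axis k3 1)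
                 + wedge (axis k1 1) (C *s axis k2 1 + E *s axis k3 1)"
  proof -
    have "\<omega>'$i$j = (wedge (axis k0 1) (A *s axis k2 1 + B *s axis k3 1)
                 + wedge (axis k1 1) (C *s axis k2 1 + E *s axis k3 1))$i$j" for i j
    proof -
      have e: "(wedge (axis k0 1) (A *s axis k2 1 + B *s axis k3 1)
                 + wedge (axis k1 1) (C *s axis k2 1 + E *s axis k3 1))$i$j =
           (if i = k0 then (if j = k2 then A else 0) + (if j = k3 then B else 0) else 0)
         - (if j = k0 then (if i = k2 then A else 0) + (if i = k3 then B else 0) else 0)
         + (if i = k1 then (if j = k2 then C else 0) + (if j = k3 then E else 0) else 0)
         - (if j = k1 then (if i = k2 then C else 0) + (if i = k3 then E else 0) else 0)"
        using kd by (simp add: wedge_axis_entry, simp add: axis_def)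
      have ci: "i = k0 \<or> i = k1 \<or> i = k2 \<or> i = k3 \<or> (i \<noteq> k0 \<and> i \<noteq> k1 \<and> i \<noteq> k2 \<and> i \<noteq> k3)" by blast
      have cj: "j = k0 \<or> j = k1 \<or> j = k2 \<or> j = k3 \<or> (j \<noteq> k0 \<and> j \<noteq> k1 \<and> j \<noteq> k2 \<and> j \<noteq> k3)" by blast
      show ?thesis unfolding e
        using ci cj kd
        by (elim disjE conjE) (simp_all add: Z1 Z2 S1 A_def[symmetric] B_def[symmetric] C_def[symmetric] E_def[symmetric])
    qed
    then show ?thesis by (simp add: vec_eq_iff)
  qed
  have "- (c *s u2) - d *s u3 = (-c) *s u2 + (-d) *s u3" by (simp add: vec_eq_iff)
  have "\<omega> = g ** \<omega>' ** transpose g"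
    unfolding \<omega>'_def
    by (metis gh matrix_mul_assoc matrix_transpose_mul matrix_mul_lid matrix_mul_rid transpose_mat)
  also have "\<dots> = wedge u0 (A *s u2 + B *s u3) + wedge u1 (C *s u2 + E *s u3)"
    unfolding main cong_add cong_wedge mv_lin gax k ..
  finally show ?thesis by blast
qed

lemma indep4:
  assumes "vindep2 u0 u1" "vindep2 u2 u3" "vspan2 u0 u1 \<inter> vspan2 u2 u3 = {0}"
    and "a *s u0 + b *s u1 + c *s u2 + d *s u3 = 0"
  shows "a = 0 \<and> b = 0 \<and> c = 0 \<and> d = 0"
proof -
  let ?x = "a *s u0 + b *s u1"
  have x2: "?x = (-c) *s u2 + (-d) *s u3"
  proof -
    have "?x + (c *s u2 + d *s u3) = 0" using assms(4) by (simp add: add.assoc)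
    then have "?x = - (c *s u2 + d *s u3)" by (simp only: eq_neg_iff_add_eq_0)
    then show ?thesis by (simp add: vec_eq_iff)
  qed
  have "- (c *s u2) - d *s u3 = (-c) *s u2 + (-d) *s u3" by (simp add: vec_eq_iff)
  have "?x \<in> vspan2 u0 u1" unfolding vspan2_def by blast
  moreover have "?x \<in> vspan2 u2 u3" unfolding vspan2_def x2 by blast
  ultimately have "?x = 0" using assms(3) by blast
  then have "a = 0 \<and> b = 0" using assms(1) unfolding vindep2_def by blast
  moreover have "c = 0 \<and> d = 0"
  proof -
    have "(-c) *s u2 + (-d) *s u3 = 0" using \<open>?x = 0\<close> x2 by simp
    then have "-c = 0 \<and> -d = 0" using assms(2) unfolding vindep2_def by blast
    then show ?thesis by simp
  qed
  ultimately show ?thesis by blast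
qed

theorem mainTheorem7:
  fixes L L' :: "cmat set" and D D' :: "cvec set" and \<omega> :: cmat
  assumes "general_line L" and "general_line L'" and "L \<noteq> L'"
    and "\<omega> \<noteq> 0" and "\<omega> \<in> L" and "\<omega> \<in> L'"
    and "is_pivot L D" and "is_pivot L' D'"
    and "D \<inter> D' = {0}"
  shows "\<exists>e0 e1 e2 e3 (c::complex). vindep2 e0 e1 \<and> D = vspan2 e0 e1 \<and>
           vindep2 e2 e3 \<and> D' = vspan2 e2 e3 \<and>
           c \<noteq> 0 \<and> \<omega> = msc c (wedge e0 e2 + wedge e1 e3)"
proof -
  obtain u0 u1 where U1: "vindep2 u0 u1" "D = vspan2 u0 u1" and LD: "L \<subseteq> wedge_sp D"
    using assms(7) unfolding is_pivot_def two_dim_subspace_def by blast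
  obtain u2 u3 where U2: "vindep2 u2 u3" "D' = vspan2 u2 u3" and LD': "L' \<subseteq> wedge_sp D'"
    using assms(8) unfolding is_pivot_def two_dim_subspace_def by blast
  have rk: "crank \<omega> = 4"
    using assms(1,4,5) unfolding general_line_def rank_four_line_def by blast
  obtain p q where r1: "\<omega> = wedge u0 p + wedge u1 q"
    using wedge_sp_span2[of \<omega> u0 u1] LD assms(5) U1(2) by blast
  obtain r s where r2: "\<omega> = wedge u2 r + wedge u3 s"
    using wedge_sp_span2[of \<omega> u2 u3] LD' assms(6) U2(2) by blast
  have I: "a = 0 \<and> b = 0 \<and> c = 0 \<and> d = 0" if "a *s u0 + b *s u1 + c *s u2 + d *s u3 = 0" for a b c d
    using indep4[OF U1(1) U2(1) _ that] assms(9) U1(2) U2(2) by blast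
  have d: "u0 \<noteq> u1" "u0 \<noteq> u2" "u0 \<noteq> u3" "u1 \<noteq> u2" "u1 \<noteq> u3" "u2 \<noteq> u3"
  proof -
    show "u0 \<noteq> u1" using I[of 1 "-1" 0 0] by auto
    show "u0 \<noteq> u2" using I[of 1 0 "-1" 0] by auto
    show "u0 \<noteq> u3" using I[of 1 0 0 "-1"] by auto
    show "u1 \<noteq> u2" using I[of 0 1 "-1" 0] by auto
    show "u1 \<noteq> u3" using I[of 0 1 0 "-1"] by auto
    show "u2 \<noteq> u3" using I[of 0 0 1 "-1"] by auto
  qed
  have ind: "vec.independent {u0,u1,u2,u3}"
  proof -
    have "\<forall>v\<in>{u0,u1,u2,u3}. c v = 0" if "(\<Sum>v\<in>{u0,u1,u2,u3}. c v *s v) = 0" for c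
    proof -
      have "c u0 *s u0 + c u1 *s u1 + c u2 *s u2 + c u3 *s u3 = 0"
        using that d by (simp add: add.assoc)
      then show ?thesis using I by blast
    qed
    then show ?thesis by (auto simp: vec.dependent_finite)
  qed
  obtain A B C E where W: "\<omega> = wedge u0 (A *s u2 + B *s u3) + wedge u1 (C *s u2 + E *s u3)"
    using core[OF ind d r1 r2] by blast
  show ?thesis
  proof (cases "A * E - B * C = 0")
    case True
    have "\<exists>x y. \<omega> = wedge x y"
    proof (cases "A = 0 \<and> B = 0")
      case True
      then have "\<omega> = wedge u1 (C *s u2 + E *s u3)" using W by simp
      then show ?thesis by blast
    next
      case False
      then obtain t where t: "C = t * A" "E = t * B"
      proof (cases "A = 0")
        case A0: True
        then have "B \<noteq> 0" using False by simp
        then have "C = 0" using \<open>A * E - B * C = 0\<close> A0 by simp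
        then show ?thesis using that[of "E / B"] A0 \<open>B \<noteq> 0\<close> by simp
      next
        case A0: False
        have "E = (C / A) * B" using \<open>A * E - B * C = 0\<close> A0
          by (simp add: field_simps)
        then show ?thesis using that[of "C / A"] A0 by simp
      qed
      have "\<omega> = wedge (u0 + t *s u1) (A *s u2 + B *s u3)"
        using W t by (simp add: wedge_def vec_eq_iff algebra_simps)
      then show ?thesis by blast
    qed
    then have "crank \<omega> \<le> 2" using crank_wedge_le by auto
    then show ?thesis using rk by simp
  next
    case False
    define \<Delta> where "\<Delta> = A * E - B * C"
    have \<Delta>: "\<Delta> \<noteq> 0" using False \<Delta>_def by simp
    define e2 where "e2 = A *s u2 + B *s u3"
    define e3 where "e3 = C *s u2 + E *s u3"
    have lin: "x *s e2 + y *s e3 = (x * A + y * C) *s u2 + (x * B + y * E) *s u3" for x y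
      by (simp add: e2_def e3_def vec_eq_iff algebra_simps)
    have vi: "vindep2 e2 e3"
      unfolding vindep2_def
    proof (intro allI impI)
      fix x y assume "x *s e2 + y *s e3 = 0"
      then have "x * A + y * C = 0 \<and> x * B + y * E = 0"
        using U2(1) lin unfolding vindep2_def by metis
      moreover have "x * \<Delta> = E * (x * A + y * C) - C * (x * B + y * E)"
        "y * \<Delta> = A * (x * B + y * E) - B * (x * A + y * C)"
        unfolding \<Delta>_def by (simp_all add: algebra_simps)
      ultimately have "x * \<Delta> = 0" "y * \<Delta> = 0" by simp_all
      then show "x = 0 \<and> y = 0" using \<Delta> by simp
    qed
    have sp: "vspan2 u2 u3 = vspan2 e2 e3"
    proof
      show "vspan2 e2 e3 \<subseteq> vspan2 u2 u3" unfolding vspan2_def using lin by blast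
    next
      show "vspan2 u2 u3 \<subseteq> vspan2 e2 e3"
      proof
        fix z assume "z \<in> vspan2 u2 u3"
        then obtain a b where z: "z = a *s u2 + b *s u3" unfolding vspan2_def by blast
        let ?x = "(a * E - b * C) / \<Delta>" and ?y = "(b * A - a * B) / \<Delta>"
        have "?x * A + ?y * C = ((a*E - b*C)*A + (b*A - a*B)*C) / \<Delta>"
          using \<Delta> by (simp add: field_simps)
        also have "(a*E - b*C)*A + (b*A - a*B)*C = a * \<Delta>"
          unfolding \<Delta>_def by (simp add: algebra_simps)
        finally have h1: "?x * A + ?y * C = a" using \<Delta> by simp
        have "?x * B + ?y * E = ((a*E - b*C)*B + (b*A - a*B)*E) / \<Delta>"
          using \<Delta> by (simp add: field_simps)
        also have "(a*E - b*C)*B + (b*A - a*B)*E = b * \<Delta>"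
          unfolding \<Delta>_def by (simp add: algebra_simps)
        finally have h2: "?x * B + ?y * E = b" using \<Delta> by simp
        note h = h1 h2
        have "z = ?x *s e2 + ?y *s e3" by (simp only: lin h1 h2 z)
        then show "z \<in> vspan2 e2 e3" unfolding vspan2_def by blast
      qed
    qed
    have "\<omega> = msc 1 (wedge u0 e2 + wedge u1 e3)"
      using W by (simp add: msc_def e2_def e3_def vec_eq_iff)
    then show ?thesis using U1 U2 vi sp by (metis one_neq_zero)
  qed
qed

end
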